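(* The following structures have oligomorphic approximation: (i) every countable homogeneous oligomorphic structure $\mathbb{A}$ for which there is a family $\mathscr{B}$ of finite substructures of $\mathbb{A}$ such that every finite substructure of $\mathbb{A}$ is a substructure of some member of $\mathscr{B}$ and every member of $\mathscr{B}$ is homogeneous; (ii) the equality atoms; (iii) the vector atoms over any finite field $\mathsf{k}$; (iv) the Rado atoms.
   Context: A structure is a set with interpretations of relation symbols of a vocabulary; embeddings preserve and reflect relations and are injective; a substructure is the restriction to a subset. A structure $\mathbb{A}$ is homogeneous if every isomorphism between finite substructures of $\mathbb{A}$ extends to an automorphism of $\mathbb{A}$; oligomorphic if $\operatorname{Aut}(\mathbb{A})$ has finitely many orbits on $\mathbb{A}^d$ for every $d\ge1$. A homogeneous structure $\mathbb{A}$ has oligomorphic approximation if for every $d\ge1$ there is a family $\mathscr{B}$ of finite substructures of $\mathbb{A}$ such that (1) every finite substructure of $\mathbb{A}$ is a substructure of some $\mathbb{B}\in\mathscr{B}$, and (2) there is a finite bound, uniform over $\mathbb{B}\in\mathscr{B}$, on the number of orbits of $\operatorname{Aut}(\mathbb{B})$ on $\mathbb{B}^d$. Equality atoms: $\mathbb{N}$ with no relations besides equality. Vector atoms over a finite field $\mathsf{k}$: the countably-infinite-dimensional $\mathsf{k}$-vector space, with, for every $d$ and $\lambda_1,\dots,\lambda_d\in\mathsf{k}$, the $d$-ary relation $\lambda_1a_1+\dots+\lambda_da_d=0$ (so automorphisms are the linear bijections). Rado atoms: the Rado graph (the Fraïssé limit of all finite undirected graphs, i.e. the unique countable homogeneous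 graph into which every finite graph embeds), over a single symmetric irreflexive binary edge relation. *)

theory Defs
  imports Main "HOL-Library.Countable_Set"
begin

record ('a, 'r) struct =
  univ :: "'a set"
  syms :: "'r set"
  ar   :: "'r \<Rightarrow> nat"
  rel  :: "'r \<Rightarrow> 'a list \<Rightarrow> bool"

definition tuples :: "('a, 'r) struct \<Rightarrow> nat \<Rightarrow> 'a list set" where
  "tuples A d = {xs. length xs = d \<and> set xs \<subseteq> univ A}"

definition restr :: "('a, 'r) struct \<Rightarrow> 'a set \<Rightarrow> ('a, 'r) struct" where
  "restr A S = A\<lparr>univ := S\<rparr>"

definition embedding :: "('a, 'r) struct \<Rightarrow> ('b, 'r) struct \<Rightarrow> ('a \<Rightarrow> 'b) \<Rightarrow> bool" where
  "embedding A B f \<longleftrightarrow>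
     inj_on f (univ A) \<and> f ` univ A \<subseteq> univ B \<and>
     (\<forall>r \<in> syms A. \<forall>xs. length xs = ar A r \<and> set xs \<subseteq> univ A \<longrightarrow>
        (rel A r xs \<longleftrightarrow> rel B r (map f xs)))"

definition isomorphism :: "('a, 'r) struct \<Rightarrow> ('b, 'r) struct \<Rightarrow> ('a \<Rightarrow> 'b) \<Rightarrow> bool" where
  "isomorphism A B f \<longleftrightarrow> embedding A B f \<and> f ` univ A = univ B"

definition automorphism :: "('a, 'r) struct \<Rightarrow> ('a \<Rightarrow> 'a) \<Rightarrow> bool" where
  "automorphism A g \<longleftrightarrow> isomorphism A A g"

definition homogeneous :: "('a, 'r) struct \<Rightarrow> bool" where
  "homogeneous A \<longleftrightarrow>
     (\<forall>S T f. finite S \<and> finite T \<and> S \<subseteq> univ A \<and> T \<subseteq> univ A \<and>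
        isomorphism (restr A S) (restr A T) f \<longrightarrow>
        (\<exists>g. automorphism A g \<and> (\<forall>x\<in>S. g x = f x)))"

definition orbit :: "('a, 'r) struct \<Rightarrow> 'a list \<Rightarrow> 'a list set" where
  "orbit A xs = {map g xs | g. automorphism A g}"

definition orbits :: "('a, 'r) struct \<Rightarrow> nat \<Rightarrow> 'a list set set" where
  "orbits A d = orbit A ` tuples A d"

definition oligomorphic :: "('a, 'r) struct \<Rightarrow> bool" where
  "oligomorphic A \<longleftrightarrow> (\<forall>d\<ge>1. finite (orbits A d))"

text \<open>Every finite substructure of A (induced on finite S) is a substructure of some
  member of the family; members are finite substructures of A (given by their universes).\<close>
definition covering_family :: "('a, 'r) struct \<Rightarrow> 'a set set \<Rightarrow> bool" where
  "covering_family A \<B> \<longleftrightarrow>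
     (\<forall>B\<in>\<B>. finite B \<and> B \<subseteq> univ A) \<and>
     (\<forall>S. finite S \<and> S \<subseteq> univ A \<longrightarrow> (\<exists>B\<in>\<B>. S \<subseteq> B))"

definition oligomorphic_approximation :: "('a, 'r) struct \<Rightarrow> bool" where
  "oligomorphic_approximation A \<longleftrightarrow>
     (\<forall>d\<ge>1. \<exists>\<B>. covering_family A \<B> \<and>
        (\<exists>N::nat. \<forall>B\<in>\<B>. finite (orbits (restr A B) d) \<and> card (orbits (restr A B) d) \<le> N))"

definition equality_atoms :: "(nat, unit) struct" where
  "equality_atoms = \<lparr>univ = UNIV, syms = {}, ar = (\<lambda>_. 0), rel = (\<lambda>_ _. False)\<rparr>"

text \<open>Vector atoms over a finite field k: the countably-infinite-dimensional k-vector
  space, modelled as finitely supported functions nat \<Rightarrow> k; for every d \<ge> 1 and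
  coefficients [l1,...,ld] the d-ary relation l1 a1 + ... + ld ad = 0.\<close>
definition vector_atoms :: "(nat \<Rightarrow> 'k::{field,finite}, 'k list) struct" where
  "vector_atoms =
     \<lparr>univ = {v. finite {i. v i \<noteq> 0}},
      syms = {ls. ls \<noteq> []},
      ar = length,
      rel = (\<lambda>ls xs. (\<lambda>j. \<Sum>i<length ls. ls ! i * (xs ! i) j) = (\<lambda>_. 0))\<rparr>"

definition graph_struct :: "'a set \<Rightarrow> ('a \<Rightarrow> 'a \<Rightarrow> bool) \<Rightarrow> ('a, unit) struct" where
  "graph_struct V E = \<lparr>univ = V, syms = {()}, ar = (\<lambda>_. 2), rel = (\<lambda>_ xs. E (xs ! 0) (xs ! 1))\<rparr>"

definition is_graph :: "'a set \<Rightarrow> ('a \<Rightarrow> 'a \<Rightarrow> bool) \<Rightarrow> bool" where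
  "is_graph V E \<longleftrightarrow> (\<forall>x\<in>V. \<forall>y\<in>V. E x y \<longleftrightarrow> E y x) \<and> (\<forall>x\<in>V. \<not> E x x)"

text \<open>Rado graph: a countable homogeneous graph into which every finite graph embeds
  (finite graphs up to isomorphism are represented on finite subsets of nat).\<close>
definition is_rado_graph :: "'a set \<Rightarrow> ('a \<Rightarrow> 'a \<Rightarrow> bool) \<Rightarrow> bool" where
  "is_rado_graph V E \<longleftrightarrow>
     countable V \<and> is_graph V E \<and> homogeneous (graph_struct V E) \<and>
     (\<forall>(W::nat set) F. finite W \<and> is_graph W F \<longrightarrow>
        (\<exists>f. embedding (graph_struct W F) (graph_struct V E) f))"

end

theory Submission
  imports Defs "HOL-Library.Function_Algebras" HOL.Vector_Spaces "HOL-Library.Z2"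
begin

lemma automorphism_id: "automorphism A id"
  unfolding automorphism_def isomorphism_def embedding_def by auto

lemma automorphism_comp:
  assumes g: "automorphism A g" and h: "automorphism A h"
  shows "automorphism A (h \<circ> g)"
proof -
  have gi: "inj_on g (univ A)" "g ` univ A = univ A" and
       gr: "\<And>r xs. r \<in> syms A \<Longrightarrow> length xs = ar A r \<Longrightarrow> set xs \<subseteq> univ A \<Longrightarrow> rel A r xs = rel A r (map g xs)"
    using g unfolding automorphism_def isomorphism_def embedding_def by auto
  have hi: "inj_on h (univ A)" "h ` univ A = univ A" and
       hr: "\<And>r xs. r \<in> syms A \<Longrightarrow> length xs = ar A r \<Longrightarrow> set xs \<subseteq> univ A \<Longrightarrow> rel A r xs = rel A r (map h xs)"
    using h unfolding automorphism_def isomorphism_def embedding_def by auto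
  have "inj_on (h \<circ> g) (univ A)" using gi hi by (simp add: comp_inj_on)
  moreover have "(h \<circ> g) ` univ A = univ A" using gi hi by (metis image_comp)
  moreover have "rel A r xs = rel A r (map (h \<circ> g) xs)"
    if "r \<in> syms A" "length xs = ar A r" "set xs \<subseteq> univ A" for r xs
  proof -
    have "set (map g xs) \<subseteq> univ A" using that gi by auto
    then show ?thesis using gr[OF that] hr[OF that(1) _ \<open>set (map g xs) \<subseteq> univ A\<close>] that(2) by simp
  qed
  ultimately show ?thesis unfolding automorphism_def isomorphism_def embedding_def by auto
qed

lemma orbit_self: "xs \<in> orbit A xs"
  unfolding orbit_def using automorphism_id[of A] by (auto intro!: exI[of _ id])

lemma orbit_sub:
  assumes "y \<in> orbit A x" shows "orbit A y \<subseteq> orbit A x"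
proof
  fix z assume "z \<in> orbit A y"
  then obtain k where k: "automorphism A k" "z = map k y" unfolding orbit_def by auto
  obtain g where g: "automorphism A g" "y = map g x" using assms unfolding orbit_def by auto
  have "z = map (k \<circ> g) x" using k g by simp
  then show "z \<in> orbit A x" unfolding orbit_def using automorphism_comp[OF g(1) k(1)] by blast
qed

lemma orbits_bound:
  assumes tT: "\<And>x. x \<in> tuples A d \<Longrightarrow> \<tau> x \<in> T" and fT: "finite T"
    and ext: "\<And>x y. x \<in> tuples A d \<Longrightarrow> y \<in> tuples A d \<Longrightarrow> \<tau> x = \<tau> y \<Longrightarrow>
                 (\<exists>g. automorphism A g \<and> map g x = y)"
  shows "finite (orbits A d) \<and> card (orbits A d) \<le> card T"
proof -
  have eq: "orbit A x = orbit A y" if "x \<in> tuples A d" "y \<in> tuples A d" "\<tau> x = \<tau> y" for x y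
  proof -
    have "y \<in> orbit A x" using ext[OF that] unfolding orbit_def by auto
    moreover have "x \<in> orbit A y" using ext[OF that(2,1) that(3)[symmetric]] unfolding orbit_def by auto
    ultimately show ?thesis using orbit_sub by blast
  qed
  define h where "h t = orbit A (SOME x. x \<in> tuples A d \<and> \<tau> x = t)" for t
  have "orbits A d \<subseteq> h ` (\<tau> ` tuples A d)"
  proof
    fix Ob assume "Ob \<in> orbits A d"
    then obtain x where x: "x \<in> tuples A d" "Ob = orbit A x" unfolding orbits_def by auto
    have "\<exists>z. z \<in> tuples A d \<and> \<tau> z = \<tau> x" using x by auto
    then have "(SOME z. z \<in> tuples A d \<and> \<tau> z = \<tau> x) \<in> tuples A d \<and> \<tau> (SOME z. z \<in> tuples A d \<and> \<tau> z = \<tau> x) = \<tau> x"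
      by (rule someI_ex)
    then have "h (\<tau> x) = Ob" unfolding h_def using eq x by metis
    then show "Ob \<in> h ` (\<tau> ` tuples A d)" using x by auto
  qed
  moreover have "\<tau> ` tuples A d \<subseteq> T" using tT by auto
  then have "finite (\<tau> ` tuples A d)" "card (\<tau> ` tuples A d) \<le> card T"
    using fT finite_subset card_mono by auto
  ultimately show ?thesis
    by (meson card_image_le card_mono finite_imageI finite_subset le_trans)
qed

lemma ext_induct:
  fixes good :: "('a \<Rightarrow> 'a) \<Rightarrow> bool" and \<tau> :: "'a list \<Rightarrow> 't"
  assumes comp: "\<And>g h. good g \<Longrightarrow> good h \<Longrightarrow> good (h \<circ> g)"
    and gid: "good id"
    and pres: "\<And>g x. good g \<Longrightarrow> set x \<subseteq> W \<Longrightarrow> \<tau> (map g x) = \<tau> x"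
    and maps: "\<And>g v. good g \<Longrightarrow> v \<in> W \<Longrightarrow> g v \<in> W"
    and restr: "\<And>x y a b. length x = length y \<Longrightarrow> \<tau> (x@[a]) = \<tau> (y@[b]) \<Longrightarrow> \<tau> x = \<tau> y"
    and step: "\<And>x a b. set x \<subseteq> W \<Longrightarrow> a \<in> W \<Longrightarrow> b \<in> W \<Longrightarrow> \<tau> (x@[a]) = \<tau> (x@[b]) \<Longrightarrow>
                  \<exists>h. good h \<and> (\<forall>v\<in>set x. h v = v) \<and> h a = b"
  shows "length x = length y \<Longrightarrow> set x \<subseteq> W \<Longrightarrow> set y \<subseteq> W \<Longrightarrow> \<tau> x = \<tau> y \<Longrightarrow> \<exists>g. good g \<and> map g x = y"
proof (induction x arbitrary: y rule: rev_induct)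
  case Nil
  then show ?case using gid by auto
next
  case (snoc a xs)
  then obtain ys b where y: "y = ys @ [b]" by (metis length_0_conv rev_exhaust snoc_eq_iff_butlast)
  have l: "length xs = length ys" using snoc.prems y by simp
  have "\<tau> xs = \<tau> ys" using restr[OF l] snoc.prems y by simp
  then obtain g where g: "good g" "map g xs = ys" using snoc.IH[of ys] snoc.prems y l by auto
  have "\<tau> (ys @ [g a]) = \<tau> (xs @ [a])" using pres[OF g(1), of "xs@[a]"] snoc.prems g(2) by simp
  then have t: "\<tau> (ys @ [g a]) = \<tau> (ys @ [b])" using snoc.prems y by simp
  have "g a \<in> W" using maps[OF g(1)] snoc.prems by simp
  then obtain h where h: "good h" "\<forall>v\<in>set ys. h v = v" "h (g a) = b"
    using step[OF _ _ _ t] snoc.prems y by auto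
  have "map (h \<circ> g) (xs @ [a]) = ys @ [b]"
  proof -
    have "map h ys = ys" using h(2) by (induction ys) auto
    then show ?thesis using g(2) h(3) by (simp flip: map_map)
  qed
  then show ?case using comp[OF g(1) h(1)] y by blast
qed

lemma restr_simps[simp]: "univ (restr A S) = S" "syms (restr A S) = syms A"
  "ar (restr A S) = ar A" "rel (restr A S) = rel A"
  by (simp_all add: restr_def)

lemma restr_restr[simp]: "restr (restr A B) S = restr A S"
  by (simp add: restr_def)

lemma part1:
  assumes hom: "homogeneous A" and olig: "oligomorphic A" and cov: "covering_family A \<B>"
    and hB: "\<forall>B\<in>\<B>. homogeneous (restr A B)"
  shows "oligomorphic_approximation A"
  unfolding oligomorphic_approximation_def
proof (intro allI impI exI conjI)
  fix d :: nat assume d: "1 \<le> d"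
  show "covering_family A \<B>" by fact
  have fin: "finite (orbits A d)" using olig d unfolding oligomorphic_def by auto
  show "\<forall>B\<in>\<B>. finite (orbits (restr A B) d) \<and> card (orbits (restr A B) d) \<le> card (orbits A d)"
  proof
    fix B assume B: "B \<in> \<B>"
    have BA: "B \<subseteq> univ A" using cov B unfolding covering_family_def by auto
    have hBB: "homogeneous (restr A B)" using hB B by auto
    show "finite (orbits (restr A B) d) \<and> card (orbits (restr A B) d) \<le> card (orbits A d)"
    proof (rule orbits_bound[where \<tau> = "orbit A"])
      fix x assume "x \<in> tuples (restr A B) d"
      then have "x \<in> tuples A d" using BA unfolding tuples_def by auto
      then show "orbit A x \<in> orbits A d" unfolding orbits_def by auto
    next
      show "finite (orbits A d)" by fact
    next
      fix x y assume x: "x \<in> tuples (restr A B) d" and y: "y \<in> tuples (restr A B) d"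
        and eq: "orbit A x = orbit A y"
      have "y \<in> orbit A x" using eq orbit_self by metis
      then obtain g where g: "automorphism A g" "y = map g x" unfolding orbit_def by auto
      have xB: "set x \<subseteq> B" and yB: "set y \<subseteq> B" using x y unfolding tuples_def by auto
      have gi: "inj_on g (univ A)" and
        gr: "\<And>r xs. r \<in> syms A \<Longrightarrow> length xs = ar A r \<Longrightarrow> set xs \<subseteq> univ A \<Longrightarrow> rel A r xs = rel A r (map g xs)"
        using g(1) unfolding automorphism_def isomorphism_def embedding_def by auto
      have iso: "isomorphism (restr A (set x)) (restr A (set y)) g"
        unfolding isomorphism_def embedding_def
        using gi xB BA g(2) gr by (auto intro: inj_on_subset)
      obtain h where h: "automorphism (restr A B) h" "\<forall>v\<in>set x. h v = g v"
        using hBB[unfolded homogeneous_def, rule_format, of "set x" "set y" g] iso xB yB by auto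
      have "map h x = y" using h(2) g(2) by auto
      then show "\<exists>g. automorphism (restr A B) g \<and> map g x = y" using h(1) by blast
    qed
  qed
qed

lemma aut_eq_atoms:
  assumes "bij_betw g B B"
  shows "automorphism (restr equality_atoms B) g"
  using assms unfolding automorphism_def isomorphism_def embedding_def bij_betw_def
  by (simp add: equality_atoms_def)

definition eqpat :: "'a list \<Rightarrow> (nat \<times> nat) set" where
  "eqpat x = {(i,j). i < length x \<and> j < length x \<and> x!i = x!j}"

lemma part2: "oligomorphic_approximation equality_atoms"
  unfolding oligomorphic_approximation_def
proof (intro allI impI)
  fix d :: nat assume d: "1 \<le> d"
  define T where "T = Pow ({..<d} \<times> {..<d})"
  define \<B> where "\<B> = {B::nat set. finite B}"
  have "covering_family equality_atoms \<B>"
    unfolding covering_family_def \<B>_def by (auto simp: equality_atoms_def)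
  moreover have "\<forall>B\<in>\<B>. finite (orbits (restr equality_atoms B) d) \<and> card (orbits (restr equality_atoms B) d) \<le> card T"
  proof
    fix B assume "B \<in> \<B>"
    show "finite (orbits (restr equality_atoms B) d) \<and> card (orbits (restr equality_atoms B) d) \<le> card T"
    proof (rule orbits_bound[where \<tau> = eqpat])
      show "finite T" unfolding T_def by simp
    next
      fix x assume "x \<in> tuples (restr equality_atoms B) d"
      then show "eqpat x \<in> T" unfolding tuples_def eqpat_def T_def by auto
    next
      fix x y assume x: "x \<in> tuples (restr equality_atoms B) d" and y: "y \<in> tuples (restr equality_atoms B) d"
        and eq: "eqpat x = eqpat y"
      have "\<exists>g. bij_betw g B B \<and> map g x = y"
      proof (rule ext_induct[where W = B and \<tau> = eqpat])
        show "bij_betw g B B \<Longrightarrow> bij_betw h B B \<Longrightarrow> bij_betw (h \<circ> g) B B" for g h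
          by (rule bij_betw_trans)
        show "bij_betw id B B" by simp
        show "eqpat (map g x) = eqpat x" if "bij_betw g B B" "set x \<subseteq> B" for g x
        proof -
          have "inj_on g B" using that bij_betw_def by auto
          then have "\<And>i j. i < length x \<Longrightarrow> j < length x \<Longrightarrow> g (x!i) = g (x!j) \<longleftrightarrow> x!i = x!j"
          proof -
            fix i j assume "i < length x" "j < length x"
            then have "x!i \<in> B" "x!j \<in> B" using that(2) by (auto simp: subset_iff)
            then show "g (x!i) = g (x!j) \<longleftrightarrow> x!i = x!j" using \<open>inj_on g B\<close> by (simp add: inj_on_eq_iff)
          qed
          then show ?thesis unfolding eqpat_def by auto
        qed
        show "g v \<in> B" if "bij_betw g B B" "v \<in> B" for g v using that bij_betwE by blast
        show "eqpat x = eqpat y" if "length x = length y" "eqpat (x@[a]) = eqpat (y@[b])" for x y :: "nat list" and a b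
        proof -
          have "\<And>i j. (i < length x \<and> j < length x \<and> x!i = x!j) \<longleftrightarrow> (i < length y \<and> j < length y \<and> y!i = y!j)"
          proof -
            fix i j
            have "(i,j) \<in> eqpat (x@[a]) \<longleftrightarrow> (i,j) \<in> eqpat (y@[b])" using that by simp
            then show "(i < length x \<and> j < length x \<and> x!i = x!j) \<longleftrightarrow> (i < length y \<and> j < length y \<and> y!i = y!j)"
              unfolding eqpat_def using that(1) by (auto simp: nth_append)
          qed
          then show ?thesis unfolding eqpat_def by auto
        qed
        show "\<exists>h. bij_betw h B B \<and> (\<forall>v\<in>set x. h v = v) \<and> h a = b"
          if xs: "set x \<subseteq> B" "a \<in> B" "b \<in> B" "eqpat (x@[a]) = eqpat (x@[b])" for x a b
        proof (cases "a \<in> set x")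
          case True
          then obtain i where i: "i < length x" "x!i = a" by (auto simp: in_set_conv_nth)
          have "(i, length x) \<in> eqpat (x@[a])" unfolding eqpat_def using i by (auto simp: nth_append)
          then have "(i, length x) \<in> eqpat (x@[b])" using xs by simp
          then have "a = b" unfolding eqpat_def using i by (auto simp: nth_append)
          then show ?thesis by (intro exI[of _ id]) auto
        next
          case False
          have "b \<notin> set x"
          proof
            assume "b \<in> set x"
            then obtain i where i: "i < length x" "x!i = b" by (auto simp: in_set_conv_nth)
            have "(i, length x) \<in> eqpat (x@[b])" unfolding eqpat_def using i by (auto simp: nth_append)
            then have "(i, length x) \<in> eqpat (x@[a])" using xs by simp
            then have "a = x!i" unfolding eqpat_def using i by (auto simp: nth_append)
            then show False using False i by auto
          qed
          define h where "h z = (if z = a then b else if z = b then a else z)" for z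
          have "bij_betw h B B"
            by (rule bij_betw_byWitness[where f' = h]) (auto simp: h_def xs)
          moreover have "\<forall>v\<in>set x. h v = v" using False \<open>b \<notin> set x\<close> unfolding h_def by auto
          moreover have "h a = b" unfolding h_def by simp
          ultimately show ?thesis by blast
        qed
      qed (use x y eq in \<open>auto simp: tuples_def\<close>)
      then show "\<exists>g. automorphism (restr equality_atoms B) g \<and> map g x = y"
        using aut_eq_atoms by blast
    qed
  qed
  ultimately show "\<exists>\<B>. covering_family equality_atoms \<B> \<and>
        (\<exists>N. \<forall>B\<in>\<B>. finite (orbits (restr equality_atoms B) d) \<and> card (orbits (restr equality_atoms B) d) \<le> N)"
    by blast
qed

definition vs :: "'k::field \<Rightarrow> (nat \<Rightarrow> 'k) \<Rightarrow> (nat \<Rightarrow> 'k)" where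
  "vs c v = (\<lambda>i. c * v i)"

lemma vs_vector_space: "vector_space (vs :: 'k::field \<Rightarrow> _)"
  by unfold_locales (auto simp: vs_def fun_eq_iff algebra_simps)

lemma times_vector_space: "vector_space ((*) :: 'k::field \<Rightarrow> 'k \<Rightarrow> 'k)"
  by unfold_locales (auto simp: algebra_simps)

interpretation V: vector_space "vs :: 'k::field \<Rightarrow> _"
  by (rule vs_vector_space)

interpretation VV: vector_space_pair "vs :: 'k::field \<Rightarrow> _" "vs :: 'k::field \<Rightarrow> _"
  by unfold_locales

interpretation VP: vector_space_pair "vs :: 'k::field \<Rightarrow> _" "(*) :: 'k \<Rightarrow> 'k \<Rightarrow> 'k"
  by (intro vector_space_pair.intro vs_vector_space times_vector_space)

lemma vs_apply: "vs c v i = c * v i" by (simp add: vs_def)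

lemma sum_fun_apply: "(sum f A) j = sum (\<lambda>i. f i j) A"
  by (induction A rule: infinite_finite_induct) auto

definition Wn :: "nat \<Rightarrow> (nat \<Rightarrow> 'k::zero) set" where
  "Wn n = {v. \<forall>i\<ge>n. v i = 0}"

definition lc :: "'k::field list \<Rightarrow> (nat \<Rightarrow> 'k) list \<Rightarrow> nat \<Rightarrow> 'k" where
  "lc cs xs = (\<Sum>i<length cs. vs (cs!i) (xs!i))"

definition rels :: "(nat \<Rightarrow> 'k::field) list \<Rightarrow> 'k list set" where
  "rels xs = {cs. length cs = length xs \<and> lc cs xs = 0}"

lemma lc_snoc: "length cs = length xs \<Longrightarrow> lc (cs@[c]) (xs@[a]) = lc cs xs + vs c a"
  unfolding lc_def by (simp add: nth_append)

lemma lc_cons: "lc (c#cs) (x#xs) = vs c x + lc cs xs"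
  unfolding lc_def length_Cons sum.lessThan_Suc_shift by simp

lemma lc_Nil[simp]: "lc [] xs = 0" unfolding lc_def by simp

lemma lc_in_span: "length cs = length xs \<Longrightarrow> lc cs xs \<in> V.span (set xs)"
  unfolding lc_def by (intro V.span_sum V.span_scale V.span_base) auto

lemma span_lc: "a \<in> V.span (set xs) \<Longrightarrow> \<exists>cs. length cs = length xs \<and> a = lc cs xs"
proof (induction xs arbitrary: a)
  case Nil
  then show ?case by (auto simp: fun_eq_iff)
next
  case (Cons x xs)
  then obtain k where "a - vs k x \<in> V.span (set xs)" using V.span_breakdown_eq[of a x "set xs"] Cons.prems by auto
  then obtain cs where "length cs = length xs" "a - vs k x = lc cs xs" using Cons.IH by blast
  then show ?case by (intro exI[of _ "k#cs"]) (auto simp: lc_cons algebra_simps)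
qed

lemma lc_map: "Vector_Spaces.linear vs vs g \<Longrightarrow> length cs = length xs \<Longrightarrow> lc cs (map g xs) = g (lc cs xs)"
proof -
  assume g: "Vector_Spaces.linear vs vs g"
  assume l: "length cs = length xs"
  show ?thesis unfolding lc_def using l by (simp add: VV.linear_sum[OF g] VV.linear_scale[OF g] o_def)
qed

lemma Wn_add: "u \<in> Wn n \<Longrightarrow> v \<in> Wn n \<Longrightarrow> u + v \<in> Wn n"
  and Wn_diff: "u \<in> Wn n \<Longrightarrow> v \<in> Wn n \<Longrightarrow> u - v \<in> Wn n"
  and Wn_vs: "u \<in> Wn n \<Longrightarrow> vs c u \<in> Wn n"
  and Wn_zero: "0 \<in> Wn n"
  by (auto simp: Wn_def vs_apply)

lemma lc_Wn: "length cs = length xs \<Longrightarrow> set xs \<subseteq> Wn n \<Longrightarrow> lc cs xs \<in> Wn n"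
  unfolding lc_def Wn_def by (auto simp: sum_fun_apply vs_apply subset_iff intro!: sum.neutral)

lemma rel_lc: "(\<lambda>j. \<Sum>i<length ls. ls ! i * (xs ! i) j) = lc ls xs"
  unfolding lc_def by (simp add: fun_eq_iff sum_fun_apply vs_apply)

lemma in_span_same:
  assumes "rels (x@[a]) = rels (x@[b])" "a \<in> V.span (set x)"
  shows "b = a"
proof -
  obtain cs where cs: "length cs = length x" "a = lc cs x" using span_lc assms(2) by blast
  have "cs@[-1] \<in> rels (x@[a])" unfolding rels_def using cs
    by (simp add: lc_snoc fun_eq_iff)
  then have "cs@[-1] \<in> rels (x@[b])" using assms by simp
  then have "lc cs x + vs (-1) b = 0" unfolding rels_def using cs by (simp add: lc_snoc)
  then show "b = a" using cs by (simp add: fun_eq_iff)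
qed

lemma functional_exists:
  fixes x :: "(nat \<Rightarrow> 'k::field) list"
  assumes a: "a \<notin> V.span (set x)" and b: "b \<notin> V.span (set x)"
  shows "\<exists>f. Vector_Spaces.linear vs (*) f \<and> (\<forall>v\<in>V.span (set x). f v = 0) \<and> f a = 1 \<and> f b \<noteq> 0"
proof -
  obtain S0 where S0: "S0 \<subseteq> set x" "V.independent S0" "set x \<subseteq> V.span S0"
    using V.maximal_independent_subset[of "set x"] by blast
  have sp: "V.span S0 = V.span (set x)"
    using S0 by (metis V.span_mono V.span_span subset_antisym)
  have aS: "a \<notin> V.span S0" using a sp by simp
  have bS: "b \<notin> V.span S0" using b sp by simp
  have aS0: "a \<notin> S0" using aS V.span_base by blast
  have ind1: "V.independent (insert a S0)" using V.independent_insertI[OF aS S0(2)] .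
  have van: "f v = 0" if "Vector_Spaces.linear vs (*) f" "\<forall>s\<in>S0. f s = 0" "v \<in> V.span (set x)" for f v
    using VP.linear_eq_0_on_span[OF that(1)] that sp by metis
  show ?thesis
  proof (cases "b \<in> V.span (insert a S0)")
    case True
    then obtain k where k: "b - vs k a \<in> V.span S0" using V.span_breakdown_eq by blast
    obtain f where f: "Vector_Spaces.linear vs (*) f" "\<forall>v\<in>insert a S0. f v = (if v = a then 1 else 0)"
      using VP.linear_independent_extend[OF ind1, of "\<lambda>v. if v = a then 1 else 0"] by blast
    have f0: "\<forall>s\<in>S0. f s = 0" using f(2) aS0 by auto
    have "f (b - vs k a) = 0" using van[OF f(1) f0] k sp by simp
    then have "f b = k" using f VP.linear_diff[OF f(1)] VP.linear_scale[OF f(1)] by simp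
    moreover have "k \<noteq> 0"
    proof
      assume "k = 0"
      then have "b \<in> V.span S0" using k by (simp add: V.scale_zero_left)
      then show False using bS by simp
    qed
    ultimately show ?thesis using f f0 van by (intro exI[of _ f]) auto
  next
    case False
    have ind2: "V.independent (insert b (insert a S0))" using V.independent_insertI[OF False ind1] .
    have "b \<noteq> a" using False V.span_base by blast
    obtain f where f: "Vector_Spaces.linear vs (*) f" "\<forall>v\<in>insert b (insert a S0). f v = (if v = a \<or> v = b then 1 else 0)"
      using VP.linear_independent_extend[OF ind2, of "\<lambda>v. if v = a \<or> v = b then 1 else 0"] by blast
    have f0: "\<forall>s\<in>S0. f s = 0" using f(2) aS0 bS V.span_base by fastforce
    show ?thesis using f f0 van by (intro exI[of _ f]) auto
  qed
qed

lemma gl_step: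
  fixes x :: "(nat \<Rightarrow> 'k::field) list"
  assumes x: "set x \<subseteq> Wn n" "a \<in> Wn n" "b \<in> Wn n" "rels (x@[a]) = rels (x@[b])"
  shows "\<exists>h. (Vector_Spaces.linear vs vs h \<and> bij_betw h (Wn n) (Wn n)) \<and> (\<forall>v\<in>set x. h v = v) \<and> h a = b"
proof (cases "a \<in> V.span (set x)")
  case True
  then have "b = a" using in_span_same x(4) by blast
  then show ?thesis by (intro exI[of _ id]) (simp add: V.linear_id)
next
  case False
  have bnot: "b \<notin> V.span (set x)"
  proof
    assume "b \<in> V.span (set x)"
    then have "a = b" using in_span_same x(4)[symmetric] by blast
    then show False using False \<open>b \<in> V.span (set x)\<close> by simp
  qed
  obtain f where f: "Vector_Spaces.linear vs (*) f" "\<forall>v\<in>V.span (set x). f v = 0" "f a = 1" "f b \<noteq> 0"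
    using functional_exists[OF False bnot] by blast
  have fadd: "f (u + v) = f u + f v" for u v using VP.linear_add[OF f(1)] .
  have fsc: "f (vs t u) = t * f u" for t u using VP.linear_scale[OF f(1)] .
  have fdiff: "f (u - v) = f u - f v" for u v using VP.linear_diff[OF f(1)] .
  define c where "c = b - a"
  have fc: "f c = f b - 1" unfolding c_def using fdiff f(3) by simp
  define h where "h z = z + vs (f z) c" for z
  define h' where "h' z = z - vs (f z / f b) c" for z
  have hlin: "Vector_Spaces.linear vs vs h"
    unfolding linear_iff
  proof (intro conjI allI)
    show "vector_space vs" by (rule vs_vector_space)
    show "vector_space vs" by (rule vs_vector_space)
    show "h (u + v) = h u + h v" for u v
      unfolding h_def fadd V.scale_left_distrib by (simp add: algebra_simps)
    show "h (vs t u) = vs t (h u)" for t u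
      unfolding h_def fsc V.scale_right_distrib V.scale_scale ..
  qed
  have fh: "f (h z) = f z * f b" for z
    unfolding h_def fadd fsc fc by (simp add: algebra_simps)
  have hh': "h' (h z) = z" for z
    using f(4) unfolding h'_def fh by (simp add: h_def)
  have fh': "f (h' z) = f z / f b" for z
    unfolding h'_def fdiff fsc fc using f(4) by (simp add: field_simps)
  have h'h: "h (h' z) = z" for z
    unfolding h_def fh' by (simp add: h'_def)
  have cW: "c \<in> Wn n" unfolding c_def using x by (simp add: Wn_diff)
  have hW: "h z \<in> Wn n" if "z \<in> Wn n" for z unfolding h_def using that cW by (simp add: Wn_add Wn_vs)
  have h'W: "h' z \<in> Wn n" if "z \<in> Wn n" for z unfolding h'_def using that cW by (simp add: Wn_diff Wn_vs)
  have "bij_betw h (Wn n) (Wn n)"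
    by (rule bij_betw_byWitness[where f' = h']) (use hh' h'h hW h'W in auto)
  moreover have "\<forall>v\<in>set x. h v = v"
  proof
    fix v assume "v \<in> set x"
    then have "f v = 0" using f(2) V.span_base by blast
    then show "h v = v" unfolding h_def by (simp add: V.scale_zero_left)
  qed
  moreover have "h a = b" unfolding h_def f(3) c_def by (simp add: V.scale_one)
  ultimately show ?thesis using hlin by blast
qed

lemma good_vec_aut:
  assumes "Vector_Spaces.linear vs vs g" "bij_betw g (Wn n) (Wn n)"
  shows "automorphism (restr (vector_atoms :: (nat \<Rightarrow> 'k::{field,finite}, 'k list) struct) (Wn n)) g"
proof -
  have inj: "inj_on g (Wn n)" and im: "g ` Wn n = Wn n" using assms(2) unfolding bij_betw_def by auto
  have g0: "g 0 = 0" using VV.linear_0[OF assms(1)] .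
  have "lc ls (map g xs) = 0 \<longleftrightarrow> lc ls xs = 0" if "length xs = length ls" "set xs \<subseteq> Wn n" for ls xs
  proof -
    have "lc ls xs \<in> Wn n" using lc_Wn that by metis
    then have "g (lc ls xs) = g 0 \<longleftrightarrow> lc ls xs = 0" using inj Wn_zero inj_on_eq_iff by metis
    then show ?thesis using lc_map[OF assms(1)] that g0 by simp
  qed
  then show ?thesis
    unfolding automorphism_def isomorphism_def embedding_def
    using inj im by (auto simp: vector_atoms_def rel_lc zero_fun_def)
qed

lemma Wn_fin: "finite (Wn n :: (nat \<Rightarrow> 'k::{zero,finite}) set)"
proof -
  have "Wn n \<subseteq> (\<lambda>xs i. if i < n then xs!i else 0) ` {xs :: 'k list. set xs \<subseteq> UNIV \<and> length xs = n}"
  proof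
    fix v :: "nat \<Rightarrow> 'k" assume v: "v \<in> Wn n"
    have "v = (\<lambda>i. if i < n then (map v [0..<n])!i else 0)"
      using v by (auto simp: Wn_def fun_eq_iff)
    then show "v \<in> (\<lambda>xs i. if i < n then xs!i else 0) ` {xs :: 'k list. set xs \<subseteq> UNIV \<and> length xs = n}"
      by (intro image_eqI[of _ _ "map v [0..<n]"]) auto
  qed
  then show ?thesis by (rule finite_subset) (intro finite_imageI finite_lists_length_eq finite_UNIV)
qed

lemma part3: "oligomorphic_approximation (vector_atoms :: (nat \<Rightarrow> 'k::{field,finite}, 'k list) struct)"
  unfolding oligomorphic_approximation_def
proof (intro allI impI)
  fix d :: nat assume d: "1 \<le> d"
  define T :: "'k list set set" where "T = Pow {cs. set cs \<subseteq> UNIV \<and> length cs = d}"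
  define \<B> :: "(nat \<Rightarrow> 'k) set set" where "\<B> = range Wn"
  have cov: "covering_family (vector_atoms :: (nat \<Rightarrow> 'k, 'k list) struct) \<B>"
    unfolding covering_family_def
  proof (intro conjI ballI allI impI)
    fix B assume "B \<in> \<B>"
    then obtain n where B: "B = Wn n" unfolding \<B>_def by auto
    show "finite B" using B Wn_fin by simp
    have supp: "{i. v i \<noteq> 0} \<subseteq> {..<n}" if "v \<in> Wn n" for v :: "nat \<Rightarrow> 'k"
      using that by (auto simp: Wn_def not_less[symmetric])
    show "B \<subseteq> univ vector_atoms"
    proof
      fix v assume "v \<in> B"
      then have "{i. v i \<noteq> 0} \<subseteq> {..<n}" using B supp by simp
      then have "finite {i. v i \<noteq> 0}" by (rule finite_subset) simp
      then show "v \<in> univ vector_atoms" by (simp add: vector_atoms_def)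
    qed
  next
    fix S :: "(nat \<Rightarrow> 'k) set" assume S: "finite S \<and> S \<subseteq> univ vector_atoms"
    have "\<forall>v\<in>S. \<exists>m. \<forall>i. v i \<noteq> 0 \<longrightarrow> i < m"
    proof
      fix v assume "v \<in> S"
      then have "finite {i. v i \<noteq> 0}" using S by (auto simp: vector_atoms_def)
      then show "\<exists>m. \<forall>i. v i \<noteq> 0 \<longrightarrow> i < m" by (auto simp: finite_nat_set_iff_bounded)
    qed
    then obtain bd where bd: "\<forall>v\<in>S. \<forall>i. v i \<noteq> 0 \<longrightarrow> i < bd v" by metis
    have "S \<subseteq> Wn (sum bd S)"
    proof
      fix v assume v: "v \<in> S"
      have "bd v \<le> sum bd S" using S v by (simp add: member_le_sum)
      then show "v \<in> Wn (sum bd S)" unfolding Wn_def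
      proof (intro CollectI allI impI)
        fix i assume le: "bd v \<le> sum bd S" and i: "sum bd S \<le> i"
        show "v i = 0"
        proof (rule ccontr)
          assume "v i \<noteq> 0"
          then have "i < bd v" using bd v by blast
          then show False using le i by linarith
        qed
      qed
    qed
    then show "\<exists>B\<in>\<B>. S \<subseteq> B" unfolding \<B>_def by blast
  qed
  moreover have "\<forall>B\<in>\<B>. finite (orbits (restr vector_atoms B) d) \<and> card (orbits (restr (vector_atoms :: (nat \<Rightarrow> 'k, 'k list) struct) B) d) \<le> card T"
  proof
    fix B assume "B \<in> \<B>"
    then obtain n where B: "B = Wn n" unfolding \<B>_def by auto
    show "finite (orbits (restr vector_atoms B) d) \<and> card (orbits (restr (vector_atoms :: (nat \<Rightarrow> 'k, 'k list) struct) B) d) \<le> card T"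
    proof (rule orbits_bound[where \<tau> = rels])
      show "finite T" unfolding T_def by (intro finite_Pow_iff[THEN iffD2] finite_lists_length_eq finite_UNIV)
    next
      fix x assume "x \<in> tuples (restr (vector_atoms :: (nat \<Rightarrow> 'k, 'k list) struct) B) d"
      then show "rels x \<in> T" unfolding tuples_def rels_def T_def by auto
    next
      fix x y assume x: "x \<in> tuples (restr (vector_atoms :: (nat \<Rightarrow> 'k, 'k list) struct) B) d"
        and y: "y \<in> tuples (restr (vector_atoms :: (nat \<Rightarrow> 'k, 'k list) struct) B) d"
        and eq: "rels x = rels y"
      have "\<exists>g. (Vector_Spaces.linear vs vs g \<and> bij_betw g (Wn n) (Wn n)) \<and> map g x = y"
      proof (rule ext_induct[where W = "Wn n" and \<tau> = rels])
        show "(Vector_Spaces.linear vs vs (h \<circ> g) \<and> bij_betw (h \<circ> g) (Wn n) (Wn n))"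
          if "Vector_Spaces.linear vs vs g \<and> bij_betw g (Wn n) (Wn n)" "Vector_Spaces.linear vs vs h \<and> bij_betw h (Wn n) (Wn n)"
          for g h :: "(nat \<Rightarrow> 'k) \<Rightarrow> (nat \<Rightarrow> 'k)"
          using that by (meson Vector_Spaces.linear_compose bij_betw_trans)
        show "Vector_Spaces.linear vs vs (id :: (nat \<Rightarrow> 'k) \<Rightarrow> _) \<and> bij_betw id (Wn n) (Wn n)"
          by (simp add: V.linear_id)
        show "rels (map g x) = rels x" if "Vector_Spaces.linear vs vs g \<and> bij_betw g (Wn n) (Wn n)" "set x \<subseteq> Wn n"
          for g and x :: "(nat \<Rightarrow> 'k) list"
        proof -
          have inj: "inj_on g (Wn n)" using that bij_betw_def by auto
          have g0: "g 0 = 0" using VV.linear_0 that by blast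
          have "lc cs (map g x) = 0 \<longleftrightarrow> lc cs x = 0" if "length cs = length x" for cs
          proof -
            have "lc cs x \<in> Wn n" using lc_Wn that \<open>set x \<subseteq> Wn n\<close> by metis
            then have "g (lc cs x) = g 0 \<longleftrightarrow> lc cs x = 0" using inj Wn_zero inj_on_eq_iff by metis
            then show ?thesis using lc_map[of g cs x] \<open>Vector_Spaces.linear vs vs g \<and> bij_betw g (Wn n) (Wn n)\<close> that g0 by simp
          qed
          then show ?thesis unfolding rels_def by auto
        qed
        show "g v \<in> Wn n" if "Vector_Spaces.linear vs vs g \<and> bij_betw g (Wn n) (Wn n)" "v \<in> Wn n" for g and v :: "nat \<Rightarrow> 'k"
          using that bij_betwE by blast
        show "rels x = rels y" if "length x = length y" "rels (x@[a]) = rels (y@[b])" for x y :: "(nat \<Rightarrow> 'k) list" and a b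
        proof -
          have "cs \<in> rels x \<longleftrightarrow> cs @ [0] \<in> rels (x@[a])" for cs
            unfolding rels_def by (auto simp: lc_snoc V.scale_zero_left)
          moreover have "cs \<in> rels y \<longleftrightarrow> cs @ [0] \<in> rels (y@[b])" for cs
            unfolding rels_def by (auto simp: lc_snoc V.scale_zero_left)
          ultimately show ?thesis using that by blast
        qed
        show "\<exists>h. (Vector_Spaces.linear vs vs h \<and> bij_betw h (Wn n) (Wn n)) \<and> (\<forall>v\<in>set x. h v = v) \<and> h a = b"
          if "set x \<subseteq> Wn n" "a \<in> Wn n" "b \<in> Wn n" "rels (x@[a]) = rels (x@[b])" for x a b
          using gl_step[OF that] .
      qed (use x y eq B in \<open>auto simp: tuples_def\<close>)
      then show "\<exists>g. automorphism (restr vector_atoms B) g \<and> map g x = y"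
        using good_vec_aut B by blast
    qed
  qed
  ultimately show "\<exists>\<B>. covering_family vector_atoms \<B> \<and>
        (\<exists>N. \<forall>B\<in>\<B>. finite (orbits (restr (vector_atoms :: (nat \<Rightarrow> 'k, 'k list) struct) B) d) \<and> card (orbits (restr (vector_atoms :: (nat \<Rightarrow> 'k, 'k list) struct) B) d) \<le> N)"
    by blast
qed

declare add_bit_eq_xor[simp del] mult_bit_eq_and[simp del]

lemma bit_UNIV: "(UNIV :: bit set) = {0, 1}"
  using bit_not_zero_iff by auto

lemma finite_bit: "finite (UNIV :: bit set)"
  by (simp add: bit_UNIV)

lemma bit_add_self[simp]: "x + x = (0::bit)"
  by (cases x) simp_all

lemma bit_minus[simp]: "- x = (x::bit)" by simp

lemma bit_diff: "x - y = (x::bit) + y" by simp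

lemma fun_bit_diff: "(u :: nat \<Rightarrow> bit) - v = u + v"
  by (simp add: fun_eq_iff)

lemma fun_bit_add_self[simp]: "(u :: nat \<Rightarrow> bit) + u = 0"
  by (simp add: fun_eq_iff)

definition sp :: "nat \<Rightarrow> (nat \<Rightarrow> bit) \<Rightarrow> (nat \<Rightarrow> bit) \<Rightarrow> bit" where
  "sp m u v = (\<Sum>i<m. u (2*i) * v (2*i+1) + u (2*i+1) * v (2*i))"

lemma sp_add1: "sp m (u + v) w = sp m u w + sp m v w"
  unfolding sp_def sum.distrib[symmetric] by (intro sum.cong refl) (simp add: distrib_right add_ac)

lemma sp_sym: "sp m u v = sp m v u"
  unfolding sp_def by (intro sum.cong refl) (metis add.commute mult.commute)

lemma sp_add2: "sp m w (u + v) = sp m w u + sp m w v"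
  using sp_add1[of m u v w] sp_sym by metis

lemma sp_vs1: "sp m (vs c u) w = c * sp m u w"
  unfolding sp_def sum_distrib_left vs_apply by (rule sum.cong) (rule refl, simp only: distrib_left mult.assoc)

lemma sp_vs2: "sp m w (vs c u) = c * sp m w u"
  using sp_vs1[of m c u w] sp_sym by metis

lemma sp_self[simp]: "sp m u u = 0"
  unfolding sp_def by (intro sum.neutral ballI) (simp add: mult.commute)

lemma bit_xy: "x * y + y * x = (0::bit)"
  by (simp add: mult.commute)

definition tv :: "nat \<Rightarrow> (nat \<Rightarrow> bit) \<Rightarrow> (nat \<Rightarrow> bit) \<Rightarrow> (nat \<Rightarrow> bit)" where
  "tv m c z = z + vs (sp m z c) c"

lemma tv_linear: "Vector_Spaces.linear vs vs (tv m c)"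
  unfolding linear_iff
proof (intro conjI allI)
  show "vector_space (vs :: bit \<Rightarrow> _)" by (rule vs_vector_space)
  show "vector_space (vs :: bit \<Rightarrow> _)" by (rule vs_vector_space)
  show "tv m c (u + v) = tv m c u + tv m c v" for u v
    unfolding tv_def sp_add1 V.scale_left_distrib by (simp add: add_ac)
  show "tv m c (vs t u) = vs t (tv m c u)" for t u
    unfolding tv_def sp_vs1 V.scale_right_distrib V.scale_scale ..
qed

lemma tv_iso: "sp m (tv m c u) (tv m c v) = sp m u v"
proof -
  define a where "a = sp m u c"
  define b where "b = sp m v c"
  have "sp m (tv m c u) (tv m c v) = (sp m u v + sp m (vs a c) v) + (sp m u (vs b c) + sp m (vs a c) (vs b c))"
    unfolding tv_def a_def b_def sp_add1 sp_add2 ..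
  also have "\<dots> = (sp m u v + a * b) + (b * a + a * (b * 0))"
    unfolding sp_vs1 sp_vs2 sp_self a_def b_def by (simp add: sp_sym[of m c v])
  also have "\<dots> = sp m u v"
    by (simp add: mult.commute add.assoc)
  finally show ?thesis .
qed

lemma tv_inv: "tv m c (tv m c z) = z"
proof -
  have "sp m (tv m c z) c = sp m z c"
    unfolding tv_def sp_add1 sp_vs1 by simp
  then show ?thesis unfolding tv_def[of m c "tv m c z"] by (simp add: tv_def add.assoc)
qed

lemma tv_W: "c \<in> Wn n \<Longrightarrow> z \<in> Wn n \<Longrightarrow> tv m c z \<in> Wn n"
  unfolding tv_def by (simp add: Wn_add Wn_vs)

definition good_sp :: "nat \<Rightarrow> ((nat \<Rightarrow> bit) \<Rightarrow> (nat \<Rightarrow> bit)) \<Rightarrow> bool" where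
  "good_sp m g \<longleftrightarrow> Vector_Spaces.linear vs vs g \<and> bij_betw g (Wn (2*m)) (Wn (2*m)) \<and> (\<forall>u v. sp m (g u) (g v) = sp m u v)"

lemma good_tv: "c \<in> Wn (2*m) \<Longrightarrow> good_sp m (tv m c)"
  unfolding good_sp_def
  by (auto simp: tv_linear tv_iso tv_W tv_inv intro!: bij_betw_byWitness[where f' = "tv m c"])

lemma good_comp: "good_sp m g \<Longrightarrow> good_sp m h \<Longrightarrow> good_sp m (h \<circ> g)"
  unfolding good_sp_def by (auto intro: Vector_Spaces.linear_compose bij_betw_trans)

lemma good_id: "good_sp m id"
  unfolding good_sp_def by (simp add: V.linear_id)

definition ev :: "nat \<Rightarrow> nat \<Rightarrow> bit" where "ev t = (\<lambda>i. if i = t then 1 else 0)"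

definition rep :: "nat \<Rightarrow> ((nat \<Rightarrow> bit) \<Rightarrow> bit) \<Rightarrow> nat \<Rightarrow> bit" where
  "rep m f = (\<lambda>j. if j < 2*m then f (ev (if even j then j+1 else j-1)) else 0)"

lemma sum_pairs: "(\<Sum>j<2*m. g j) = (\<Sum>i<m. g (2*i) + g (2*i+1))" for m :: nat and g :: "nat \<Rightarrow> 'a::comm_monoid_add"
  by (induction m) (simp_all add: algebra_simps)

lemma Wn_expand:
  assumes "z \<in> Wn N" shows "z = (\<Sum>j<N. vs (z j) (ev j))"
proof
  fix i
  have "(\<Sum>j<N. vs (z j) (ev j)) i = (\<Sum>j<N. z j * (if i = j then 1 else 0))"
    by (simp add: sum_fun_apply vs_apply ev_def)
  also have "\<dots> = (\<Sum>j<N. if i = j then z j else 0)"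
    by (intro sum.cong) auto
  also have "\<dots> = (if i < N then z i else 0)" by simp
  also have "\<dots> = z i" using assms by (auto simp: Wn_def)
  finally show "z i = (\<Sum>j<N. vs (z j) (ev j)) i" by simp
qed

lemma rep_W: "rep m f \<in> Wn (2*m)"
  by (simp add: rep_def Wn_def)

lemma rep_sp:
  assumes f: "Vector_Spaces.linear vs (*) f" and z: "z \<in> Wn (2*m)"
  shows "sp m (rep m f) z = f z"
proof -
  have "f z = f (\<Sum>j<2*m. vs (z j) (ev j))" using Wn_expand[OF z] by simp
  also have "\<dots> = (\<Sum>j<2*m. z j * f (ev j))"
    by (simp add: VP.linear_sum[OF f] VP.linear_scale[OF f])
  also have "\<dots> = (\<Sum>i<m. z (2*i) * f (ev (2*i)) + z (2*i+1) * f (ev (2*i+1)))"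
    by (rule sum_pairs)
  also have "\<dots> = sp m (rep m f) z"
    unfolding sp_def
  proof (intro sum.cong refl)
    fix i assume "i \<in> {..<m}"
    then have "rep m f (2*i) = f (ev (2*i+1))" "rep m f (2*i+1) = f (ev (2*i))"
      by (auto simp: rep_def)
    then show "z (2*i) * f (ev (2*i)) + z (2*i+1) * f (ev (2*i+1)) = rep m f (2*i) * z (2*i+1) + rep m f (2*i+1) * z (2*i)"
      by (metis add.commute mult.commute)
  qed
  finally show ?thesis by simp
qed

definition gram :: "nat \<Rightarrow> (nat \<Rightarrow> bit) list \<Rightarrow> bit list list" where
  "gram m x = map (\<lambda>u. map (sp m u) x) x"

definition taus :: "nat \<Rightarrow> (nat \<Rightarrow> bit) list \<Rightarrow> bit list set \<times> bit list list" where
  "taus m x = (rels x, gram m x)"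

lemma gram_prefix: "gram m x = map (take (length x)) (butlast (gram m (x@[a])))"
  unfolding gram_def by simp

lemma gram_last: "last (gram m (x@[a])) = map (sp m a) x @ [sp m a a]"
  unfolding gram_def by simp

lemma rels_map:
  fixes g :: "(nat \<Rightarrow> 'k::field) \<Rightarrow> (nat \<Rightarrow> 'k)"
  assumes g: "Vector_Spaces.linear vs vs g" "inj_on g (Wn N)" and x: "set x \<subseteq> Wn N"
  shows "rels (map g x) = rels x"
proof -
  have g0: "g 0 = 0" using VV.linear_0[OF g(1)] .
  have "lc cs (map g x) = 0 \<longleftrightarrow> lc cs x = 0" if "length cs = length x" for cs
  proof -
    have "lc cs x \<in> Wn N" using lc_Wn that x by metis
    then have "g (lc cs x) = g 0 \<longleftrightarrow> lc cs x = 0" using g(2) Wn_zero inj_on_eq_iff by metis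
    then show ?thesis using lc_map[of g cs x] g(1) that g0 by simp
  qed
  then show ?thesis unfolding rels_def by auto
qed

lemma rels_restr: "length x = length y \<Longrightarrow> rels (x@[a]) = rels (y@[b]) \<Longrightarrow> rels x = rels y"
proof -
  assume l: "length x = length y" and e: "rels (x@[a]) = rels (y@[b])"
  have "cs \<in> rels x \<longleftrightarrow> cs @ [0] \<in> rels (x@[a])" for cs
    unfolding rels_def by (auto simp: lc_snoc V.scale_zero_left)
  moreover have "cs \<in> rels y \<longleftrightarrow> cs @ [0] \<in> rels (y@[b])" for cs
    unfolding rels_def by (auto simp: lc_snoc V.scale_zero_left)
  ultimately show ?thesis using e by blast
qed

lemma sp_step:
  assumes x: "set x \<subseteq> Wn (2*m)" "a \<in> Wn (2*m)" "b \<in> Wn (2*m)" "taus m (x@[a]) = taus m (x@[b])"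
  shows "\<exists>h. good_sp m h \<and> (\<forall>v\<in>set x. h v = v) \<and> h a = b"
proof -
  have R: "rels (x@[a]) = rels (x@[b])" using x(4) by (simp add: taus_def)
  have "last (gram m (x@[a])) = last (gram m (x@[b]))" using x(4) by (simp add: taus_def)
  then have "map (sp m a) x = map (sp m b) x" unfolding gram_last by simp
  then have Lv: "sp m a v = sp m b v" if "v \<in> set x" for v using that by (simp add: map_eq_conv)
  show ?thesis
  proof (cases "a \<in> V.span (set x)")
    case True
    then have "b = a" using in_span_same R by blast
    then show ?thesis using good_id by (intro exI[of _ id]) auto
  next
    case False
    have bnot: "b \<notin> V.span (set x)"
    proof
      assume "b \<in> V.span (set x)"
      then have "a = b" using in_span_same R[symmetric] by blast
      then show False using False \<open>b \<in> V.span (set x)\<close> by simp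
    qed
    show ?thesis
    proof (cases "sp m a b = 1")
      case True
      define c where "c = a + b"
      have cW: "c \<in> Wn (2*m)" unfolding c_def using x by (simp add: Wn_add)
      have fixv: "tv m c v = v" if "v \<in> set x" for v
      proof -
        have "sp m v c = sp m a v + sp m b v" unfolding c_def sp_add2 by (simp add: sp_sym)
        also have "\<dots> = 0" using Lv[OF that] by simp
        finally show ?thesis unfolding tv_def by (simp add: V.scale_zero_left)
      qed
      have "sp m a c = 1" unfolding c_def sp_add2 using True by simp
      then have "tv m c a = a + c" unfolding tv_def by (simp add: V.scale_one)
      also have "\<dots> = b" unfolding c_def by (simp add: add.assoc[symmetric])
      finally show ?thesis using good_tv[OF cW] fixv by blast
    next
      case False
      then have ab0: "sp m a b = 0" by simp
      obtain f where f: "Vector_Spaces.linear vs (*) f" "\<forall>v\<in>V.span (set x). f v = 0" "f a = 1" "f b \<noteq> 0"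
        using functional_exists[OF \<open>a \<notin> V.span (set x)\<close> bnot] by blast
      have fb: "f b = 1" using f(4) by simp
      define w where "w = rep m f"
      have wW: "w \<in> Wn (2*m)" unfolding w_def by (rule rep_W)
      have spw: "sp m w z = f z" if "z \<in> Wn (2*m)" for z unfolding w_def by (rule rep_sp[OF f(1) that])
      define e where "e = a + w"
      define dd where "dd = e + b"
      have eW: "e \<in> Wn (2*m)" unfolding e_def using x wW by (simp add: Wn_add)
      have dW: "dd \<in> Wn (2*m)" unfolding dd_def using x eW by (simp add: Wn_add)
      have g: "good_sp m (tv m dd \<circ> tv m w)" using good_comp[OF good_tv[OF wW] good_tv[OF dW]] .
      have "sp m a w = 1" using spw[OF x(2)] f(3) sp_sym by metis
      then have s1: "tv m w a = e" unfolding tv_def e_def by (simp add: V.scale_one)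
      have "sp m e dd = sp m e b" unfolding dd_def sp_add2 by simp
      also have "\<dots> = sp m a b + sp m w b" unfolding e_def sp_add1 ..
      also have "\<dots> = 1" using ab0 spw[OF x(3)] fb by simp
      finally have "tv m dd e = e + dd" unfolding tv_def by (simp add: V.scale_one)
      also have "\<dots> = b" unfolding dd_def by (simp add: add.assoc[symmetric])
      finally have s2: "tv m dd e = b" .
      have fixv: "(tv m dd \<circ> tv m w) v = v" if "v \<in> set x" for v
      proof -
        have vW: "v \<in> Wn (2*m)" using that x(1) by auto
        have fv: "f v = 0" using f(2) V.span_base that by blast
        have "sp m v w = 0" using spw[OF vW] fv sp_sym by metis
        then have t1: "tv m w v = v" unfolding tv_def by (simp add: V.scale_zero_left)
        have "sp m v dd = (sp m v a + sp m v w) + sp m v b" unfolding dd_def e_def sp_add2 ..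
        also have "\<dots> = sp m a v + sp m b v" using \<open>sp m v w = 0\<close> by (simp add: sp_sym)
        also have "\<dots> = 0" using Lv[OF that] by simp
        finally have "tv m dd v = v" unfolding tv_def by (simp add: V.scale_zero_left)
        then show ?thesis using t1 by simp
      qed
      have "(tv m dd \<circ> tv m w) a = b" using s1 s2 by simp
      then show ?thesis using g fixv by blast
    qed
  qed
qed

lemma restr_graph: "restr (graph_struct V E) B = graph_struct B E"
  by (simp add: restr_def graph_struct_def)

lemma univ_graph[simp]: "univ (graph_struct V E) = V"
  by (simp add: graph_struct_def)

lemma len2: "length xs = 2 \<longleftrightarrow> (\<exists>u v. xs = [u, v])"
  by (auto simp: numeral_2_eq_2 length_Suc_conv)

lemma emb_graph_iff:
  "embedding (graph_struct X P) (graph_struct Y Q) f \<longleftrightarrow>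
     inj_on f X \<and> f ` X \<subseteq> Y \<and> (\<forall>u\<in>X. \<forall>v\<in>X. P u v \<longleftrightarrow> Q (f u) (f v))"
proof -
  have "(\<forall>xs. length xs = 2 \<and> set xs \<subseteq> X \<longrightarrow> (P (xs!0) (xs!1) \<longleftrightarrow> Q (map f xs ! 0) (map f xs ! 1)))
        \<longleftrightarrow> (\<forall>u\<in>X. \<forall>v\<in>X. P u v \<longleftrightarrow> Q (f u) (f v))"
  proof
    assume H: "\<forall>xs. length xs = 2 \<and> set xs \<subseteq> X \<longrightarrow> (P (xs!0) (xs!1) \<longleftrightarrow> Q (map f xs ! 0) (map f xs ! 1))"
    show "\<forall>u\<in>X. \<forall>v\<in>X. P u v \<longleftrightarrow> Q (f u) (f v)"
    proof (intro ballI)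
      fix u v assume "u \<in> X" "v \<in> X"
      then show "P u v \<longleftrightarrow> Q (f u) (f v)" using H[rule_format, of "[u, v]"] by simp
    qed
  next
    assume H: "\<forall>u\<in>X. \<forall>v\<in>X. P u v \<longleftrightarrow> Q (f u) (f v)"
    show "\<forall>xs. length xs = 2 \<and> set xs \<subseteq> X \<longrightarrow> (P (xs!0) (xs!1) \<longleftrightarrow> Q (map f xs ! 0) (map f xs ! 1))"
    proof (intro allI impI)
      fix xs :: "'a list" assume xs: "length xs = 2 \<and> set xs \<subseteq> X"
      then obtain u v where "xs = [u, v]" using len2[of xs] by auto
      then show "P (xs!0) (xs!1) \<longleftrightarrow> Q (map f xs ! 0) (map f xs ! 1)" using xs H by simp
    qed
  qed
  moreover have "embedding (graph_struct X P) (graph_struct Y Q) f \<longleftrightarrow> inj_on f X \<and> f ` X \<subseteq> Y \<and> (\<forall>xs. length xs = 2 \<and> set xs \<subseteq> X \<longrightarrow> (P (xs!0) (xs!1) \<longleftrightarrow> Q (map f xs ! 0) (map f xs ! 1)))"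
    unfolding embedding_def graph_struct_def struct.select_convs by (simp only: ball_simps simp_thms)
  ultimately show ?thesis by simp
qed

lemma aut_graph_iff:
  "automorphism (graph_struct X P) f \<longleftrightarrow>
     inj_on f X \<and> f ` X = X \<and> (\<forall>u\<in>X. \<forall>v\<in>X. P u v \<longleftrightarrow> P (f u) (f v))"
  unfolding automorphism_def isomorphism_def emb_graph_iff by auto

lemma graph_orbits_transfer:
  assumes inj: "inj_on \<psi> U" and fin: "finite (orbits (graph_struct U F) d)"
    and edges: "\<forall>u\<in>U. \<forall>v\<in>U. F u v \<longleftrightarrow> E (\<psi> u) (\<psi> v)"
  shows "finite (orbits (graph_struct (\<psi> ` U) E) d) \<and> card (orbits (graph_struct (\<psi> ` U) E) d) \<le> card (orbits (graph_struct U F) d)"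
proof (rule orbits_bound[where \<tau> = "\<lambda>x. orbit (graph_struct U F) (map (inv_into U \<psi>) x)"])
  show "finite (orbits (graph_struct U F) d)" by fact
next
  fix x assume "x \<in> tuples (graph_struct (\<psi> ` U) E) d"
  then have "map (inv_into U \<psi>) x \<in> tuples (graph_struct U F) d"
    unfolding tuples_def by (auto intro: inv_into_into)
  then show "orbit (graph_struct U F) (map (inv_into U \<psi>) x) \<in> orbits (graph_struct U F) d"
    unfolding orbits_def by auto
next
  fix x y assume x: "x \<in> tuples (graph_struct (\<psi> ` U) E) d" and y: "y \<in> tuples (graph_struct (\<psi> ` U) E) d"
    and eq: "orbit (graph_struct U F) (map (inv_into U \<psi>) x) = orbit (graph_struct U F) (map (inv_into U \<psi>) y)"
  let ?i = "inv_into U \<psi>"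
  have "map ?i y \<in> orbit (graph_struct U F) (map ?i x)" using eq orbit_self by metis
  then obtain \<sigma> where \<sigma>: "automorphism (graph_struct U F) \<sigma>" "map ?i y = map \<sigma> (map ?i x)"
    unfolding orbit_def by auto
  have \<sigma>b: "bij_betw \<sigma> U U" and \<sigma>e: "\<forall>u\<in>U. \<forall>v\<in>U. F u v \<longleftrightarrow> F (\<sigma> u) (\<sigma> v)"
    using \<sigma>(1) unfolding aut_graph_iff bij_betw_def by auto
  have \<psi>b: "bij_betw \<psi> U (\<psi> ` U)" using inj by (simp add: bij_betw_imageI)
  have ib: "bij_betw ?i (\<psi> ` U) U" using bij_betw_inv_into[OF \<psi>b] .
  define g where "g = \<psi> \<circ> \<sigma> \<circ> ?i"
  have gb: "bij_betw g (\<psi> ` U) (\<psi> ` U)" unfolding g_def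
    using bij_betw_trans[OF bij_betw_trans[OF ib \<sigma>b] \<psi>b] by (simp add: comp_assoc)
  have ge: "E p q \<longleftrightarrow> E (g p) (g q)" if "p \<in> \<psi> ` U" "q \<in> \<psi> ` U" for p q
  proof -
    have pi: "?i p \<in> U" "?i q \<in> U" using that by (auto intro: inv_into_into)
    have "E p q \<longleftrightarrow> E (\<psi> (?i p)) (\<psi> (?i q))" using that by (simp add: f_inv_into_f)
    also have "\<dots> \<longleftrightarrow> F (?i p) (?i q)" using edges pi by simp
    also have "\<dots> \<longleftrightarrow> F (\<sigma> (?i p)) (\<sigma> (?i q))" using \<sigma>e pi by simp
    also have "\<dots> \<longleftrightarrow> E (g p) (g q)" unfolding g_def using edges pi \<sigma>b by (simp add: bij_betwE)
    finally show ?thesis .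
  qed
  have "automorphism (graph_struct (\<psi> ` U) E) g"
    unfolding aut_graph_iff using gb ge unfolding bij_betw_def by auto
  moreover have "map g x = y"
  proof -
    have "map g x = map \<psi> (map \<sigma> (map ?i x))" unfolding g_def by simp
    also have "\<dots> = map \<psi> (map ?i y)" using \<sigma>(2) by simp
    also have "\<dots> = y" using y unfolding tuples_def by (auto simp: f_inv_into_f intro!: map_idI)
    finally show ?thesis .
  qed
  ultimately show "\<exists>g. automorphism (graph_struct (\<psi> ` U) E) g \<and> map g x = y" by blast
qed

definition Tsp :: "nat \<Rightarrow> (bit list set \<times> bit list list) set" where
  "Tsp d = Pow {cs. set cs \<subseteq> UNIV \<and> length cs = d} \<times> {M. set M \<subseteq> {r. set r \<subseteq> UNIV \<and> length r = d} \<and> length M = d}"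

lemma finite_Tsp: "finite (Tsp d)"
  unfolding Tsp_def
  by (intro finite_cartesian_product finite_Pow_iff[THEN iffD2] finite_lists_length_eq finite_bit)

lemma Wn_fin_bit: "finite (Wn n :: (nat \<Rightarrow> bit) set)"
proof -
  have "Wn n \<subseteq> (\<lambda>xs i. if i < n then xs!i else 0) ` {xs :: bit list. set xs \<subseteq> UNIV \<and> length xs = n}"
  proof
    fix v :: "nat \<Rightarrow> bit" assume v: "v \<in> Wn n"
    have "v = (\<lambda>i. if i < n then (map v [0..<n])!i else 0)"
      using v by (auto simp: Wn_def fun_eq_iff)
    then show "v \<in> (\<lambda>xs i. if i < n then xs!i else 0) ` {xs :: bit list. set xs \<subseteq> UNIV \<and> length xs = n}"
      by (intro image_eqI[of _ _ "map v [0..<n]"]) auto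
  qed
  then show ?thesis by (rule finite_subset) (intro finite_imageI finite_lists_length_eq finite_bit)
qed

lemma G0_bound:
  "finite (orbits (graph_struct (Wn (2*m)) (\<lambda>u v. sp m u v = 1)) d) \<and>
   card (orbits (graph_struct (Wn (2*m)) (\<lambda>u v. sp m u v = 1)) d) \<le> card (Tsp d)"
proof (rule orbits_bound[where \<tau> = "taus m"])
  show "finite (Tsp d)" by (rule finite_Tsp)
next
  fix x assume "x \<in> tuples (graph_struct (Wn (2*m)) (\<lambda>u v. sp m u v = 1)) d"
  then have l: "length x = d" unfolding tuples_def by auto
  then show "taus m x \<in> Tsp d" unfolding taus_def Tsp_def rels_def gram_def by auto
next
  fix x y assume x: "x \<in> tuples (graph_struct (Wn (2*m)) (\<lambda>u v. sp m u v = 1)) d"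
    and y: "y \<in> tuples (graph_struct (Wn (2*m)) (\<lambda>u v. sp m u v = 1)) d" and eq: "taus m x = taus m y"
  have "\<exists>g. good_sp m g \<and> map g x = y"
  proof (rule ext_induct[where W = "Wn (2*m)" and \<tau> = "taus m"])
    show "good_sp m g \<Longrightarrow> good_sp m h \<Longrightarrow> good_sp m (h \<circ> g)" for g h by (rule good_comp)
    show "good_sp m id" by (rule good_id)
    show "taus m (map g x) = taus m x" if "good_sp m g" "set x \<subseteq> Wn (2*m)" for g x
    proof -
      have g: "Vector_Spaces.linear vs vs g" "inj_on g (Wn (2*m))" "\<forall>u v. sp m (g u) (g v) = sp m u v"
        using that(1) unfolding good_sp_def bij_betw_def by auto
      have "rels (map g x) = rels x" by (rule rels_map[OF g(1) g(2) that(2)])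
      moreover have "gram m (map g x) = gram m x" unfolding gram_def using g(3) by simp
      ultimately show ?thesis unfolding taus_def by simp
    qed
    show "g v \<in> Wn (2*m)" if "good_sp m g" "v \<in> Wn (2*m)" for g v
    proof -
      have "bij_betw g (Wn (2*m)) (Wn (2*m))" using that(1) unfolding good_sp_def by simp
      then show ?thesis using that(2) bij_betwE by blast
    qed
    show "taus m x = taus m y" if "length x = length y" "taus m (x@[a]) = taus m (y@[b])" for x y a b
    proof -
      have "rels (x@[a]) = rels (y@[b])" using that(2) by (simp add: taus_def)
      then have "rels x = rels y" using rels_restr[OF that(1)] by blast
      moreover have "gram m x = gram m y"
        using gram_prefix[of m x a] gram_prefix[of m y b] that by (simp add: taus_def)
      ultimately show ?thesis unfolding taus_def by simp
    qed
    show "\<exists>h. good_sp m h \<and> (\<forall>v\<in>set x. h v = v) \<and> h a = b"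
      if "set x \<subseteq> Wn (2*m)" "a \<in> Wn (2*m)" "b \<in> Wn (2*m)" "taus m (x@[a]) = taus m (x@[b])" for x a b
      by (rule sp_step[OF that])
  qed (use x y eq in \<open>auto simp: tuples_def\<close>)
  then obtain g where g: "good_sp m g" "map g x = y" by blast
  have "automorphism (graph_struct (Wn (2*m)) (\<lambda>u v. sp m u v = 1)) g"
    unfolding aut_graph_iff using g(1) unfolding good_sp_def bij_betw_def by auto
  then show "\<exists>g. automorphism (graph_struct (Wn (2*m)) (\<lambda>u v. sp m u v = 1)) g \<and> map g x = y"
    using g(2) by blast
qed

lemma of_bool_bit_one: "(of_bool P :: bit) = 1 \<longleftrightarrow> P" by simp

lemma rado_S_embed:
  assumes G: "is_graph V E" and S: "finite S" "S \<subseteq> V"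
  shows "\<exists>p. inj_on p S \<and> p ` S \<subseteq> Wn (2 * card S) \<and> (\<forall>a\<in>S. \<forall>b\<in>S. E a b \<longleftrightarrow> sp (card S) (p a) (p b) = 1)"
proof -
  define k where "k = card S"
  obtain s where s: "bij_betw s {0..<k} S" using ex_bij_betw_nat_finite[OF S(1)] k_def by blast
  have sV: "s i \<in> V" if "i < k" for i using s S(2) that bij_betwE by fastforce
  define vec :: "nat \<Rightarrow> nat \<Rightarrow> bit" where
    "vec i t = of_bool (t = 2*i \<or> (odd t \<and> t div 2 < i \<and> E (s i) (s (t div 2))))" for i t
  have v0: "vec i (2*l) = of_bool (l = i)" for i l unfolding vec_def by simp
  have v1: "vec i (2*l+1) = of_bool (l < i \<and> E (s i) (s l))" for i l
  proof -
    have "2*l+1 \<noteq> 2*i" by presburger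
    then show ?thesis unfolding vec_def by simp
  qed
  have spv: "sp k (vec i) (vec j) = 1 \<longleftrightarrow> E (s i) (s j)" if ij: "i < k" "j < k" for i j
  proof -
    have tm: "vec i (2*l) * vec j (2*l+1) + vec i (2*l+1) * vec j (2*l) =
      (if l = i then of_bool (i < j \<and> E (s j) (s i)) else 0) + (if l = j then of_bool (j < i \<and> E (s i) (s j)) else 0)" for l
      unfolding v0 v1 by (cases "l = i"; cases "l = j") auto
    have "sp k (vec i) (vec j) = (\<Sum>l<k. (if l = i then of_bool (i < j \<and> E (s j) (s i)) else 0) + (if l = j then of_bool (j < i \<and> E (s i) (s j)) else 0))"
      unfolding sp_def tm ..
    also have "\<dots> = (\<Sum>l<k. if l = i then of_bool (i < j \<and> E (s j) (s i)) else 0) + (\<Sum>l<k. if l = j then of_bool (j < i \<and> E (s i) (s j)) else 0)"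
      by (rule sum.distrib)
    also have "\<dots> = of_bool (i < j \<and> E (s j) (s i)) + of_bool (j < i \<and> E (s i) (s j))"
      using ij by (simp add: sum.delta)
    finally have eq: "sp k (vec i) (vec j) = of_bool (i < j \<and> E (s j) (s i)) + of_bool (j < i \<and> E (s i) (s j))" .
    have sym: "E (s j) (s i) \<longleftrightarrow> E (s i) (s j)" using G sV ij unfolding is_graph_def by blast
    have irr: "\<not> E (s i) (s i)" using G sV ij unfolding is_graph_def by blast
    show ?thesis
    proof (cases "i < j")
      case True then show ?thesis using eq sym by simp
    next
      case False
      show ?thesis
      proof (cases "j < i")
        case True then show ?thesis using eq False by simp
      next
        case False
        then have "i = j" using \<open>\<not> i < j\<close> by simp
        then show ?thesis using eq irr by simp
      qed
    qed
  qed
  have vinj: "inj_on vec {0..<k}"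
  proof
    fix i j assume "i \<in> {0..<k}" "j \<in> {0..<k}" "vec i = vec j"
    then have "vec i (2*i) = vec j (2*i)" by simp
    then show "i = j" unfolding v0 by (cases "i = j") auto
  qed
  have vW: "vec i \<in> Wn (2*k)" if "i < k" for i
    unfolding Wn_def vec_def using that by auto
  define p where "p a = vec (inv_into {0..<k} s a)" for a
  have sS: "s ` {0..<k} = S" using s by (simp add: bij_betw_def)
  have iS: "inv_into {0..<k} s a \<in> {0..<k}" if "a \<in> S" for a using inv_into_into[of a s "{0..<k}"] that sS by simp
  have si: "s (inv_into {0..<k} s a) = a" if "a \<in> S" for a using f_inv_into_f[of a s "{0..<k}"] that sS by simp
  have "inj_on p S"
  proof
    fix a b assume ab: "a \<in> S" "b \<in> S" "p a = p b"
    then have "inv_into {0..<k} s a = inv_into {0..<k} s b"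
      using vinj iS unfolding p_def inj_on_def by blast
    then show "a = b" using si ab by metis
  qed
  moreover have "p ` S \<subseteq> Wn (2 * k)" using iS vW unfolding p_def by auto
  moreover have "\<forall>a\<in>S. \<forall>b\<in>S. E a b \<longleftrightarrow> sp k (p a) (p b) = 1"
  proof (intro ballI)
    fix a b assume ab: "a \<in> S" "b \<in> S"
    have "sp k (p a) (p b) = 1 \<longleftrightarrow> E (s (inv_into {0..<k} s a)) (s (inv_into {0..<k} s b))"
      unfolding p_def using spv iS ab by simp
    then show "E a b \<longleftrightarrow> sp k (p a) (p b) = 1" using si ab by simp
  qed
  ultimately show ?thesis unfolding k_def by blast
qed

lemma rado_embed:
  assumes rado: "is_rado_graph V E" and S: "finite S" "S \<subseteq> V"
    and U: "finite U" "is_graph U F"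
    and p: "inj_on p S" "p ` S \<subseteq> U" "\<forall>a\<in>S. \<forall>b\<in>S. E a b \<longleftrightarrow> F (p a) (p b)"
  shows "\<exists>\<psi>. inj_on \<psi> U \<and> \<psi> ` U \<subseteq> V \<and> (\<forall>u\<in>U. \<forall>v\<in>U. F u v \<longleftrightarrow> E (\<psi> u) (\<psi> v)) \<and> (\<forall>a\<in>S. \<psi> (p a) = a)"
proof -
  obtain enc where enc: "bij_betw enc U {0..<card U}" using ex_bij_betw_finite_nat[OF U(1)] by blast
  define W0 where "W0 = {0..<card U}"
  define dec where "dec = inv_into U enc"
  define F' where "F' i j = F (dec i) (dec j)" for i j
  have encU: "enc ` U = W0" using enc unfolding W0_def bij_betw_def by auto
  have decW: "dec i \<in> U" if "i \<in> W0" for i using that encU unfolding dec_def by (auto intro: inv_into_into)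
  have decenc: "dec (enc u) = u" if "u \<in> U" for u
    using that enc unfolding dec_def bij_betw_def by (simp add: inv_into_f_f)
  have Ug: "\<forall>x\<in>U. \<forall>y\<in>U. F x y \<longleftrightarrow> F y x" "\<forall>x\<in>U. \<not> F x x" using U(2) unfolding is_graph_def by auto
  have gW0: "is_graph W0 F'" unfolding is_graph_def F'_def
  proof (intro conjI ballI)
    fix i j assume "i \<in> W0" "j \<in> W0"
    then show "F (dec i) (dec j) \<longleftrightarrow> F (dec j) (dec i)" using Ug(1) decW by simp
  next
    fix i assume "i \<in> W0"
    then show "\<not> F (dec i) (dec i)" using Ug(2) decW by simp
  qed
  have fW0: "finite W0" unfolding W0_def by simp
  have RR: "countable V \<and> is_graph V E \<and> homogeneous (graph_struct V E) \<and>
     (\<forall>(W::nat set) F. finite W \<and> is_graph W F \<longrightarrow> (\<exists>f. embedding (graph_struct W F) (graph_struct V E) f))"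
    using rado unfolding is_rado_graph_def .
  then have univ: "\<And>(W::nat set) F. finite W \<Longrightarrow> is_graph W F \<Longrightarrow> \<exists>f. embedding (graph_struct W F) (graph_struct V E) f"
    and hom: "homogeneous (graph_struct V E)" by auto
  obtain f where f: "embedding (graph_struct W0 F') (graph_struct V E) f"
    using univ[OF fW0 gW0] by (elim exE)
  then have f1: "inj_on f W0" "f ` W0 \<subseteq> V" "\<forall>u\<in>W0. \<forall>v\<in>W0. F' u v \<longleftrightarrow> E (f u) (f v)"
    unfolding emb_graph_iff by auto
  define q where "q = f \<circ> enc"
  have q1: "inj_on q U" unfolding q_def using enc f1(1) encU
    by (metis bij_betw_def comp_inj_on)
  have q2: "q ` U \<subseteq> V" unfolding q_def using f1(2) encU by (auto simp: image_comp[symmetric])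
  have q3: "F u v \<longleftrightarrow> E (q u) (q v)" if "u \<in> U" "v \<in> U" for u v
  proof -
    have "enc u \<in> W0" "enc v \<in> W0" using encU that by auto
    then have "F' (enc u) (enc v) \<longleftrightarrow> E (f (enc u)) (f (enc v))" using f1(3) by blast
    then show ?thesis unfolding F'_def q_def using decenc that by simp
  qed
  define r where "r = q \<circ> p"
  have r1: "inj_on r S" unfolding r_def using p(1,2) q1 by (meson comp_inj_on inj_on_subset)
  have r2: "r ` S \<subseteq> V" unfolding r_def using p(2) q2 by auto
  have r3: "E a b \<longleftrightarrow> E (r a) (r b)" if "a \<in> S" "b \<in> S" for a b
  proof -
    have "p a \<in> U" "p b \<in> U" using p(2) that by auto
    then have "F (p a) (p b) \<longleftrightarrow> E (q (p a)) (q (p b))" using q3 by blast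
    then show ?thesis using p(3) that unfolding r_def by simp
  qed
  define T' where "T' = r ` S"
  define r' where "r' = inv_into S r"
  have r'T: "r' ` T' = S" unfolding r'_def T'_def using r1 by (simp add: inv_into_image_cancel)
  have r'inj: "inj_on r' T'" unfolding r'_def T'_def by (simp add: inj_on_inv_into)
  have rr': "r (r' t) = t" if "t \<in> T'" for t using that unfolding r'_def T'_def by (simp add: f_inv_into_f)
  have r'r: "r' (r a) = a" if "a \<in> S" for a using that r1 unfolding r'_def by (simp add: inv_into_f_f)
  have iso: "isomorphism (restr (graph_struct V E) T') (restr (graph_struct V E) S) r'"
    unfolding restr_graph isomorphism_def emb_graph_iff
  proof (intro conjI ballI)
    show "inj_on r' T'" by fact
    show "r' ` T' \<subseteq> S" using r'T by simp
    show "r' ` univ (graph_struct T' E) = univ (graph_struct S E)" using r'T by simp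
    fix t1 t2 assume t: "t1 \<in> T'" "t2 \<in> T'"
    then have "r' t1 \<in> S" "r' t2 \<in> S" using r'T by auto
    then have "E (r' t1) (r' t2) \<longleftrightarrow> E (r (r' t1)) (r (r' t2))" using r3 by blast
    then show "E t1 t2 \<longleftrightarrow> E (r' t1) (r' t2)" using rr' t by simp
  qed
  have "finite T'" "T' \<subseteq> V" using S(1) r2 unfolding T'_def by auto
  then have "finite T' \<and> finite S \<and> T' \<subseteq> univ (graph_struct V E) \<and> S \<subseteq> univ (graph_struct V E) \<and>
        isomorphism (restr (graph_struct V E) T') (restr (graph_struct V E) S) r'"
    using iso S by simp
  then obtain h where h: "automorphism (graph_struct V E) h" "\<forall>t\<in>T'. h t = r' t"
    using hom[unfolded homogeneous_def, rule_format, of T' S r'] by (elim exE conjE) blast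
  have h1: "inj_on h V" "h ` V = V" "\<forall>u\<in>V. \<forall>v\<in>V. E u v \<longleftrightarrow> E (h u) (h v)"
    using h(1) unfolding aut_graph_iff by auto
  define \<psi> where "\<psi> = h \<circ> q"
  have "inj_on \<psi> U" unfolding \<psi>_def using q1 q2 h1(1) by (meson comp_inj_on inj_on_subset)
  moreover have "\<psi> ` U \<subseteq> V" unfolding \<psi>_def using q2 h1(2) by (auto simp: image_comp[symmetric])
  moreover have "\<forall>u\<in>U. \<forall>v\<in>U. F u v \<longleftrightarrow> E (\<psi> u) (\<psi> v)"
  proof (intro ballI)
    fix u v assume uv: "u \<in> U" "v \<in> U"
    then have "q u \<in> V" "q v \<in> V" using q2 by auto
    then have "E (q u) (q v) \<longleftrightarrow> E (h (q u)) (h (q v))" using h1(3) by blast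
    then show "F u v \<longleftrightarrow> E (\<psi> u) (\<psi> v)" unfolding \<psi>_def using q3[OF uv] by simp
  qed
  moreover have "\<forall>a\<in>S. \<psi> (p a) = a"
  proof
    fix a assume a: "a \<in> S"
    have "r a \<in> T'" unfolding T'_def using a by simp
    then have "h (r a) = r' (r a)" using h(2) by simp
    then show "\<psi> (p a) = a" unfolding \<psi>_def using r'r a by (simp add: r_def)
  qed
  ultimately show ?thesis by blast
qed

lemma part4:
  assumes rado: "is_rado_graph V E"
  shows "oligomorphic_approximation (graph_struct V E)"
  unfolding oligomorphic_approximation_def
proof (intro allI impI)
  fix d :: nat assume "1 \<le> d"
  define N where "N = card (Tsp d)"
  define \<B> where "\<B> = {B. B \<subseteq> V \<and> finite B \<and> finite (orbits (restr (graph_struct V E) B) d) \<and> card (orbits (restr (graph_struct V E) B) d) \<le> N}"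
  have G: "is_graph V E" using rado unfolding is_rado_graph_def by blast
  have "covering_family (graph_struct V E) \<B>"
    unfolding covering_family_def
  proof (rule conjI)
    show "\<forall>B\<in>\<B>. finite B \<and> B \<subseteq> univ (graph_struct V E)" unfolding \<B>_def by simp
  next
    show "\<forall>S. finite S \<and> S \<subseteq> univ (graph_struct V E) \<longrightarrow> (\<exists>B\<in>\<B>. S \<subseteq> B)"
    proof (intro allI impI)
    fix S assume S0: "finite S \<and> S \<subseteq> univ (graph_struct V E)"
    then have S: "finite S" "S \<subseteq> V" by auto
    define k where "k = card S"
    obtain p where p: "inj_on p S" "p ` S \<subseteq> Wn (2*k)" "\<forall>a\<in>S. \<forall>b\<in>S. E a b \<longleftrightarrow> sp k (p a) (p b) = 1"
      using rado_S_embed[OF G S] unfolding k_def by blast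
    define U where "U = (Wn (2*k) :: (nat \<Rightarrow> bit) set)"
    define F where "F u v = (sp k u v = 1)" for u v
    have U: "finite U" "is_graph U F" unfolding U_def F_def is_graph_def
      using Wn_fin_bit sp_sym by auto
    obtain \<psi> where \<psi>: "inj_on \<psi> U" "\<psi> ` U \<subseteq> V" "\<forall>u\<in>U. \<forall>v\<in>U. F u v \<longleftrightarrow> E (\<psi> u) (\<psi> v)" "\<forall>a\<in>S. \<psi> (p a) = a"
      using rado_embed[OF rado S U p(1)] p(2,3) unfolding U_def F_def by blast
    have bnd: "finite (orbits (graph_struct U F) d) \<and> card (orbits (graph_struct U F) d) \<le> N"
      using G0_bound[of k d] unfolding U_def F_def N_def by simp
    have tr: "finite (orbits (graph_struct (\<psi> ` U) E) d) \<and> card (orbits (graph_struct (\<psi> ` U) E) d) \<le> card (orbits (graph_struct U F) d)"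
      by (rule graph_orbits_transfer[OF \<psi>(1) _ \<psi>(3)]) (use bnd in blast)
    have "\<psi> ` U \<in> \<B>" unfolding \<B>_def restr_graph using \<psi>(2) U(1) tr bnd by auto
    moreover have "S \<subseteq> \<psi> ` U"
    proof
      fix a assume "a \<in> S"
      then have "a = \<psi> (p a)" "p a \<in> U" using \<psi>(4) p(2) unfolding U_def by auto
      then show "a \<in> \<psi> ` U" by blast
    qed
    ultimately show "\<exists>B\<in>\<B>. S \<subseteq> B" by blast
    qed
  qed
  moreover have "\<forall>B\<in>\<B>. finite (orbits (restr (graph_struct V E) B) d) \<and> card (orbits (restr (graph_struct V E) B) d) \<le> N"
    unfolding \<B>_def by blast
  ultimately show "\<exists>\<B>. covering_family (graph_struct V E) \<B> \<and>
        (\<exists>N. \<forall>B\<in>\<B>. finite (orbits (restr (graph_struct V E) B) d) \<and> card (orbits (restr (graph_struct V E) B) d) \<le> N)"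
    by blast
qed

theorem mainTheorem2:
  shows "(\<forall>A :: ('a, 'r) struct.
            countable (univ A) \<and> homogeneous A \<and> oligomorphic A \<and>
            (\<exists>\<B>. covering_family A \<B> \<and> (\<forall>B\<in>\<B>. homogeneous (restr A B)))
            \<longrightarrow> oligomorphic_approximation A)
       \<and> oligomorphic_approximation equality_atoms
       \<and> oligomorphic_approximation (vector_atoms :: (nat \<Rightarrow> 'k::{field,finite}, 'k list) struct)
       \<and> (\<forall>(V :: 'b set) E. is_rado_graph V E \<longrightarrow> oligomorphic_approximation (graph_struct V E))"
  using part1 part2 part3 part4 by blast

end
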